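(* Let $(M,g,J_{TM})$ be a para-Hermitian manifold and let $(E,J)$ be an exact para-Hermitian algebroid over $M$ with anchor $\rho$ and eigenbundles $E_\pm$. If $E$ admits a para-complex connection $A:TM\to E$, then $$E_+=a_-^*(T^{(0,1)}M)\oplus A_+(T^+M),\qquad E_-=a_+^*(T^{(1,0)}M)\oplus A_-(T^-M).$$
   Context: A Courant algebroid $(E,\rho,\langle\cdot,\cdot\rangle,[\cdot,\cdot])$ over $M$ is a vector bundle with a non-degenerate symmetric pairing, a skew-symmetric bracket and an anchor $\rho:E\to TM$ satisfying the usual axioms; $\rho^*:T^*M\to E$ is given by $\langle\rho^*\xi,e\rangle=\xi(\rho e)$, and $E$ is exact if $0\to T^*M\xrightarrow{\rho^*}E\xrightarrow{\rho}TM\to0$ is exact. A para-Hermitian algebroid is a Courant algebroid with $J\in\Gamma(\mathrm{End}E)$, $J^2=\mathrm{Id}$, equal-rank eigenbundles $E_\pm$ (for $\pm1$), $\langle J\cdot,J\cdot\rangle=-\langle\cdot,\cdot\rangle$, and $\Gamma(E_\pm)$ both closed under the bracket. A para-Hermitian manifold $(M,g,J_{TM})$ has split-signature $g$, $J_{TM}^2=\mathrm{Id}$ with equal-rank integrable eigenbundles $T^\pm M$, and $g(J_{TM}\cdot,J_{TM}\cdot)=-g$. $T^{(1,0)}M\subset T^*M$ is the annihilator of $T^-M$ and $T^{(0,1)}M$ the annihilator of $T^+M$. Let $\pi_{E_\pm}$ be the projections for $E=E_+\oplus E_-$, $a_\pm=\rho|_{E_\pm}:E_\pm\to TM$, and $a_\pm^*:T^*M\to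 E$ be defined by $\langle a_\pm^*\xi,e\rangle=\xi(\rho(\pi_{E_\pm}e))$ for all $e\in E$ (so $a_\pm^*$ takes values in $E_\mp$). A connection is a bundle map $A:TM\to E$ with $\rho\circ A=\mathrm{Id}$ and isotropic image; it is para-complex if $J\circ A=A\circ J_{TM}$; $A_\pm$ denotes the restriction of $A$ to $T^\pm M$. *)

theory Defs
  imports "HOL-Analysis.Analysis"
begin

text \<open>Pointwise (fibrewise) model at a point x of M: 'v is the tangent space T_xM,
  'e is the fibre E_x, covectors are linear maps 'v => real.\<close>

definition covectors :: "('v::real_vector \<Rightarrow> real) set" where
  "covectors = {\<xi>. linear \<xi>}"

definition annihilator :: "'v::real_vector set \<Rightarrow> ('v \<Rightarrow> real) set" where
  "annihilator S = {\<xi>. linear \<xi> \<and> (\<forall>v\<in>S. \<xi> v = 0)}"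

definition eigenspace_pm :: "('a::real_vector \<Rightarrow> 'a) \<Rightarrow> real \<Rightarrow> 'a set" where
  "eigenspace_pm J c = {v. J v = c *\<^sub>R v}"

definition proj_plus :: "('a::real_vector \<Rightarrow> 'a) \<Rightarrow> 'a \<Rightarrow> 'a" where
  "proj_plus J e = (1/2) *\<^sub>R (e + J e)"

definition proj_minus :: "('a::real_vector \<Rightarrow> 'a) \<Rightarrow> 'a \<Rightarrow> 'a" where
  "proj_minus J e = (1/2) *\<^sub>R (e - J e)"

definition rho_star :: "('e \<Rightarrow> 'e \<Rightarrow> real) \<Rightarrow> ('e \<Rightarrow> 'v) \<Rightarrow> ('v \<Rightarrow> real) \<Rightarrow> 'e" where
  "rho_star pair rho \<xi> = (THE e. \<forall>e'. pair e e' = \<xi> (rho e'))"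

text \<open>a_pm^*: < a^* xi, e > = xi (rho (pi_pm e)); P is the projection pi_pm.\<close>
definition a_star :: "('e \<Rightarrow> 'e \<Rightarrow> real) \<Rightarrow> ('e \<Rightarrow> 'v) \<Rightarrow> ('e \<Rightarrow> 'e) \<Rightarrow> ('v \<Rightarrow> real) \<Rightarrow> 'e" where
  "a_star pair rho P \<xi> = (THE e. \<forall>e'. pair e e' = \<xi> (rho (P e')))"

definition internal_direct_sum :: "'a::real_vector set \<Rightarrow> 'a set \<Rightarrow> 'a set \<Rightarrow> bool" where
  "internal_direct_sum W S T \<longleftrightarrow> S \<inter> T = {0} \<and> W = {s + t | s t. s \<in> S \<and> t \<in> T}"

definition nondegenerate :: "('a::zero \<Rightarrow> 'a \<Rightarrow> real) \<Rightarrow> bool" where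
  "nondegenerate B \<longleftrightarrow> (\<forall>x. (\<forall>y. B x y = 0) \<longrightarrow> x = 0)"

definition symmetric_form :: "('a \<Rightarrow> 'a \<Rightarrow> real) \<Rightarrow> bool" where
  "symmetric_form B \<longleftrightarrow> (\<forall>x y. B x y = B y x)"

definition split_signature :: "('a::euclidean_space \<Rightarrow> 'a \<Rightarrow> real) \<Rightarrow> bool" where
  "split_signature B \<longleftrightarrow> even DIM('a) \<and>
     (\<exists>P N. subspace P \<and> subspace N \<and> dim P = DIM('a) div 2 \<and> dim N = DIM('a) div 2 \<and>
        (\<forall>x\<in>P. x \<noteq> 0 \<longrightarrow> B x x > 0) \<and> (\<forall>x\<in>N. x \<noteq> 0 \<longrightarrow> B x x < 0))"

end

theory Submission
  imports Defs "HOL-Analysis.Analysis"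
begin

lemma riesz_exists:
  fixes pair :: "'e::euclidean_space \<Rightarrow> 'e \<Rightarrow> real"
  assumes pb: "bilinear pair" and nd: "nondegenerate pair" and lf: "linear f"
  shows "\<exists>e. \<forall>e'. pair e e' = f e'"
proof -
  define \<phi> where "\<phi> e = (\<Sum>b\<in>Basis. pair e b *\<^sub>R b)" for e
  have l1: "linear (\<lambda>x. pair x y)" for y using pb by (simp add: bilinear_def)
  have l2: "linear (\<lambda>y. pair x y)" for x using pb by (simp add: bilinear_def)
  have lphi: "linear \<phi>"
    unfolding \<phi>_def
    by (intro linear_compose_sum ballI) (use pb in \<open>simp add: linear_iff bilinear_ladd bilinear_lmul scaleR_add_left\<close>)
  have inner_phi: "\<phi> e \<bullet> b = pair e b" if "b \<in> Basis" for e b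
    using that by (simp add: \<phi>_def inner_sum_left inner_Basis if_distrib sum.delta cong: if_cong)
  have "inj \<phi>"
  proof (rule linear_inj_iff_eq_0[THEN iffD2, OF lphi], intro allI impI)
    fix e assume "\<phi> e = 0"
    hence "\<forall>b\<in>Basis. pair e b = 0" using inner_phi by (metis inner_zero_left)
    hence "(\<lambda>y. pair e y) = (\<lambda>y. 0)"
      by (intro linear_eq_stdbasis[OF l2]) (auto simp: linear_zero)
    thus "e = 0" using nd unfolding nondegenerate_def by metis
  qed
  hence "surj \<phi>" using lphi by (simp add: linear_injective_imp_surjective)
  then obtain e where e: "\<phi> e = (\<Sum>b\<in>Basis. f b *\<^sub>R b)" by (metis surjD)
  have "\<forall>b\<in>Basis. pair e b = f b"
  proof
    fix b :: 'e assume b: "b \<in> Basis"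
    have "pair e b = \<phi> e \<bullet> b" using inner_phi b by simp
    also have "\<dots> = f b" using b unfolding e
      by (simp add: inner_sum_left inner_Basis if_distrib sum.delta cong: if_cong)
    finally show "pair e b = f b" .
  qed
  hence "(\<lambda>y. pair e y) = f" by (intro linear_eq_stdbasis[OF l2 lf]) auto
  thus ?thesis by metis
qed

lemma pair_uniq:
  fixes pair :: "'e::real_vector \<Rightarrow> 'e \<Rightarrow> real"
  assumes pb: "bilinear pair" and nd: "nondegenerate pair"
    and "\<forall>e'. pair e1 e' = pair e2 e'"
  shows "e1 = e2"
proof -
  have "\<forall>e'. pair (e1 - e2) e' = 0" using assms(3) bilinear_lsub[OF pb] by simp
  hence "e1 - e2 = 0" using nd unfolding nondegenerate_def by blast
  thus ?thesis by simp
qed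

lemma a_star_eq:
  fixes pair :: "'e::real_vector \<Rightarrow> 'e \<Rightarrow> real"
  assumes pb: "bilinear pair" and nd: "nondegenerate pair"
    and "\<forall>e'. pair y e' = \<xi> (rho (P e'))"
  shows "a_star pair rho P \<xi> = y"
  unfolding a_star_def
proof (rule the_equality)
  show "\<forall>e'. pair y e' = \<xi> (rho (P e'))" by fact
  fix e assume "\<forall>e'. pair e e' = \<xi> (rho (P e'))"
  thus "e = y" using assms(3) pair_uniq[OF pb nd] by simp
qed

lemma a_star_prop:
  fixes pair :: "'e::euclidean_space \<Rightarrow> 'e \<Rightarrow> real"
  assumes pb: "bilinear pair" and nd: "nondegenerate pair"
    and "linear \<xi>" "linear rho" "linear P"
  shows "\<forall>e'. pair (a_star pair rho P \<xi>) e' = \<xi> (rho (P e'))"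
proof -
  have "linear (\<xi> \<circ> rho \<circ> P)" using assms by (intro linear_compose) 
  then obtain y where y: "\<forall>e'. pair y e' = \<xi> (rho (P e'))"
    using riesz_exists[OF pb nd] by fastforce
  have "a_star pair rho P \<xi> = y" using y by (rule a_star_eq[OF pb nd])
  thus ?thesis using y by simp
qed

lemma rho_star_prop:
  fixes pair :: "'e::euclidean_space \<Rightarrow> 'e \<Rightarrow> real"
  assumes pb: "bilinear pair" and nd: "nondegenerate pair"
    and "linear \<xi>" "linear rho"
  shows "\<forall>e'. pair (rho_star pair rho \<xi>) e' = \<xi> (rho e')"
proof -
  have "linear (\<xi> \<circ> rho)" using assms by (intro linear_compose)
  then obtain y where y: "\<forall>e'. pair y e' = \<xi> (rho e')"
    using riesz_exists[OF pb nd] by fastforce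
  have "rho_star pair rho \<xi> = y" unfolding rho_star_def
    by (rule the_equality, rule y) (use y pair_uniq[OF pb nd] in simp)
  thus ?thesis using y by simp
qed


lemma half_sum: "(1/2) *\<^sub>R (a + b) + (1/2) *\<^sub>R (a - b) = (a::'a::real_vector)"
proof -
  have "(1/2) *\<^sub>R (a + b) + (1/2) *\<^sub>R (a - b) = (1/2) *\<^sub>R ((a + b) + (a - b))"
    by (simp only: scaleR_add_right)
  also have "(a + b) + (a - b) = 2 *\<^sub>R a" by (simp add: scaleR_2)
  finally show ?thesis by simp
qed
lemma half_twice: "(1/2) *\<^sub>R (a - - a) = (a::'a::real_vector)"
  by (metis diff_minus_eq_add scaleR_2 scaleR_half_double)

lemma half_part:
  fixes pair :: "'e::euclidean_space \<Rightarrow> 'e \<Rightarrow> real"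
    and JT :: "'v::euclidean_space \<Rightarrow> 'v"
  assumes pb: "bilinear pair" and ps: "symmetric_form pair" and nd: "nondegenerate pair"
    and rl: "linear rho"
    and rker: "{e. rho e = 0} \<subseteq> rho_star pair rho ` covectors"
    and Jl: "linear J" and Ji: "\<And>e. J (J e) = e"
    and pJ: "\<And>a b. pair (J a) (J b) = - pair a b"
    and JTl: "linear JT" and JTi: "\<And>v. JT (JT v) = v"
    and Al: "linear A" and As: "\<And>v. rho (A v) = v"
    and Ai: "\<And>u w. pair (A u) (A w) = 0"
    and Apc: "\<And>v. J (A v) = A (JT v)"
  shows "internal_direct_sum (eigenspace_pm J 1)
        (a_star pair rho (proj_minus J) ` annihilator (eigenspace_pm JT 1))
        (A ` eigenspace_pm JT 1)"
proof -
  note l1 = bilinear_ladd[OF pb] bilinear_lsub[OF pb] bilinear_lmul[OF pb] bilinear_lneg[OF pb]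
  note l2 = bilinear_radd[OF pb] bilinear_rsub[OF pb] bilinear_rmul[OF pb] bilinear_rneg[OF pb]
  note JL = linear_add[OF Jl] linear_diff[OF Jl] linear_scale[OF Jl] linear_neg[OF Jl] linear_0[OF Jl]
  note JTL = linear_add[OF JTl] linear_diff[OF JTl] linear_scale[OF JTl] linear_neg[OF JTl] linear_0[OF JTl]
  note AL = linear_add[OF Al] linear_diff[OF Al] linear_scale[OF Al] linear_neg[OF Al] linear_0[OF Al]
  note RL = linear_add[OF rl] linear_diff[OF rl] linear_scale[OF rl] linear_neg[OF rl] linear_0[OF rl]
  define Pm where "Pm = proj_minus J"
  define Pp where "Pp = proj_plus J"
  have Pml: "linear Pm"
  proof (rule linearI)
    fix x y show "Pm (x + y) = Pm x + Pm y" unfolding Pm_def proj_minus_def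
      by (simp add: linear_add[OF Jl] algebra_simps)
  next
    fix c :: real and x show "Pm (c *\<^sub>R x) = c *\<^sub>R Pm x" unfolding Pm_def proj_minus_def
      by (simp add: linear_scale[OF Jl] algebra_simps)
  qed
  have sym: "pair a b = pair b a" for a b using ps by (simp add: symmetric_form_def)
  have pJ': "pair (J x) y = - pair x (J y)" for x y using pJ[of x "J y"] Ji by simp
  have isoP: "pair x y = 0" if "J x = x" "J y = y" for x y
    using pJ[of x y] that by simp
  have isoM: "pair x y = 0" if "J x = - x" "J y = - y" for x y
    using pJ[of x y] that l1 l2 by simp
  have Pp_in: "J (Pp e) = Pp e" for e unfolding Pp_def proj_plus_def by (simp add: JL Ji algebra_simps)
  have Pm_in: "J (Pm e) = - Pm e" for e unfolding Pm_def proj_minus_def by (simp add: JL Ji algebra_simps)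
  have PpPm: "Pp e + Pm e = e" for e unfolding Pp_def Pm_def proj_plus_def proj_minus_def
    by (rule half_sum)
  have astar: "\<forall>e'. pair (a_star pair rho Pm \<xi>) e' = \<xi> (rho (Pm e'))" if "linear \<xi>" for \<xi>
    by (rule a_star_prop[OF pb nd that rl Pml])
  have S_in: "J (a_star pair rho Pm \<xi>) = a_star pair rho Pm \<xi>" if "linear \<xi>" for \<xi>
  proof -
    let ?x = "a_star pair rho Pm \<xi>"
    have "\<forall>e'. pair (J ?x) e' = pair ?x e'"
    proof
      fix e'
      have "J (J e') = e'" by (rule Ji)
      have "Pm (J e') = - Pm e'" unfolding Pm_def proj_minus_def by (simp add: JL Ji algebra_simps)
      hence "pair (J ?x) e' = - \<xi> (rho (Pm (J e')))" using pJ' astar[OF that] by simp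
      also have "\<dots> = \<xi> (rho (Pm e'))" using \<open>Pm (J e') = - Pm e'\<close> RL linear_neg[OF that] by simp
      finally show "pair (J ?x) e' = pair ?x e'" using astar[OF that] by simp
    qed
    thus ?thesis by (rule pair_uniq[OF pb nd])
  qed
  have A_in: "J (A v) = A v" if "JT v = v" for v using Apc that by simp
  have A_inM: "J (A v) = - A v" if "JT v = - v" for v using Apc that AL by simp
  show ?thesis unfolding internal_direct_sum_def Pm_def[symmetric]
  proof (intro conjI)
    show "a_star pair rho Pm ` annihilator (eigenspace_pm JT 1) \<inter> A ` eigenspace_pm JT 1 = {0}"
    proof (intro equalityI subsetI)
      fix x assume "x \<in> {0::'e}"
      hence x0: "x = 0" by simp
      have "a_star pair rho Pm (\<lambda>_. 0) = 0" by (rule a_star_eq[OF pb nd]) (simp add: l1 bilinear_lzero[OF pb])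
      moreover have "(\<lambda>_. 0::real) \<in> annihilator (eigenspace_pm JT 1)"
        by (simp add: annihilator_def linear_zero)
      moreover have "(0::'v) \<in> eigenspace_pm JT 1" by (simp add: eigenspace_pm_def JTL)
      ultimately show "x \<in> a_star pair rho Pm ` annihilator (eigenspace_pm JT 1) \<inter> A ` eigenspace_pm JT 1"
        using x0 AL by (metis IntI image_eqI)
    next
      fix x assume "x \<in> a_star pair rho Pm ` annihilator (eigenspace_pm JT 1) \<inter> A ` eigenspace_pm JT 1"
      then obtain \<xi> v where xi: "linear \<xi>" "\<forall>w. JT w = w \<longrightarrow> \<xi> w = 0" and v: "JT v = v"
        and x1: "x = a_star pair rho Pm \<xi>" and x2: "x = A v"
        by (auto simp: annihilator_def eigenspace_pm_def)
      have xm: "\<xi> w = 0" if "JT w = - w" for w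
      proof -
        have "Pm (A w) = A w" unfolding Pm_def proj_minus_def using A_inM[OF that]
          by (simp add: half_twice)
        hence "pair x (A w) = \<xi> w" using astar[OF xi(1)] x1 As by simp
        thus ?thesis using x2 Ai by simp
      qed
      have "\<xi> = (\<lambda>_. 0)"
      proof
        fix w
        define wp where "wp = (1/2) *\<^sub>R (w + JT w)"
        define wm where "wm = (1/2) *\<^sub>R (w - JT w)"
        have "w = wp + wm" unfolding wp_def wm_def using half_sum by metis
        moreover have "JT wp = wp" unfolding wp_def by (simp add: JTL JTi algebra_simps)
        moreover have "JT wm = - wm" unfolding wm_def by (simp add: JTL JTi algebra_simps)
        ultimately show "\<xi> w = 0" using xi(2) xm linear_add[OF xi(1), of wp wm] by simp
      qed
      hence "x = a_star pair rho Pm (\<lambda>_. 0)" using x1 by simp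
      also have "\<dots> = 0" by (rule a_star_eq[OF pb nd]) (simp add: bilinear_lzero[OF pb])
      finally show "x \<in> {0}" by simp
    qed
  next
    show "eigenspace_pm J 1 = {s + t |s t. s \<in> a_star pair rho Pm ` annihilator (eigenspace_pm JT 1) \<and> t \<in> A ` eigenspace_pm JT 1}"
    proof (intro equalityI subsetI)
      fix x assume "x \<in> {s + t |s t. s \<in> a_star pair rho Pm ` annihilator (eigenspace_pm JT 1) \<and> t \<in> A ` eigenspace_pm JT 1}"
      then obtain \<xi> v where "linear \<xi>" "JT v = v" "x = a_star pair rho Pm \<xi> + A v"
        by (auto simp: annihilator_def eigenspace_pm_def)
      thus "x \<in> eigenspace_pm J 1" using S_in A_in JL by (simp add: eigenspace_pm_def)
    next
      fix x assume "x \<in> eigenspace_pm J 1"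
      hence xJ: "J x = x" by (simp add: eigenspace_pm_def)
      define v where "v = rho x"
      define vp where "vp = (1/2) *\<^sub>R (v + JT v)"
      define vm where "vm = (1/2) *\<^sub>R (v - JT v)"
      have vpm: "v = vp + vm" unfolding vp_def vm_def using half_sum by metis
      have vp: "JT vp = vp" unfolding vp_def by (simp add: JTL JTi algebra_simps)
      have vm: "JT vm = - vm" unfolding vm_def by (simp add: JTL JTi algebra_simps)
      define y where "y = x - A vp"
      have yJ: "J y = y" unfolding y_def using JL xJ A_in[OF vp] by simp
      have ry: "rho y = vm" unfolding y_def using vpm v_def by (simp add: RL As)
      define \<xi> where "\<xi> w = pair y (A w)" for w
      have xil: "linear \<xi>" unfolding \<xi>_def
        using linear_compose[OF Al, of "\<lambda>z. pair y z"] pb by (simp add: bilinear_def o_def)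
      have xiann: "\<xi> \<in> annihilator (eigenspace_pm JT 1)"
        using xil isoP[OF yJ A_in] by (simp add: annihilator_def eigenspace_pm_def \<xi>_def)
      have "a_star pair rho Pm \<xi> = y"
      proof (rule a_star_eq[OF pb nd], rule allI)
        fix e'
        define f where "f = Pm e'"
        have fJ: "J f = - f" unfolding f_def by (rule Pm_in)
        have "pair y e' = pair y (Pp e') + pair y f" using bilinear_radd[OF pb, of y "Pp e'" f] PpPm[of e'] unfolding f_def by simp
        hence e1: "pair y e' = pair y f" using isoP[OF yJ Pp_in] by simp
        define k where "k = f - A (rho f)"
        have "rho k = 0" unfolding k_def by (simp add: RL As)
        then obtain \<eta> where eta: "\<eta> \<in> covectors" "k = rho_star pair rho \<eta>" using rker by blast
        have etap: "\<forall>z. pair k z = \<eta> (rho z)" using eta rho_star_prop[OF pb nd _ rl] 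
          by (simp add: covectors_def)
        have "pair y k = \<eta> vm" using etap sym[of y k] ry by simp
        also have "\<dots> = pair k (A vm)" using etap As by simp
        also have "\<dots> = pair f (A vm) - pair (A (rho f)) (A vm)" unfolding k_def by (simp add: l1)
        also have "\<dots> = 0" using isoM[OF fJ A_inM[OF vm]] Ai by simp
        finally have "pair y k = 0" .
        hence "pair y f = pair y (A (rho f))" unfolding k_def by (simp add: l2)
        thus "pair y e' = \<xi> (rho (Pm e'))" using e1 f_def \<xi>_def by simp
      qed
      moreover have "x = y + A vp" unfolding y_def by simp
      ultimately show "x \<in> {s + t |s t. s \<in> a_star pair rho Pm ` annihilator (eigenspace_pm JT 1) \<and> t \<in> A ` eigenspace_pm JT 1}"
        using xiann vp by (auto simp: eigenspace_pm_def)
    qed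
  qed
qed

theorem mainTheorem4:
  fixes g :: "'v::euclidean_space \<Rightarrow> 'v \<Rightarrow> real"
    and JT :: "'v \<Rightarrow> 'v"
    and pair :: "'e::euclidean_space \<Rightarrow> 'e \<Rightarrow> real"
    and J :: "'e \<Rightarrow> 'e"
    and rho :: "'e \<Rightarrow> 'v"
    and A :: "'v \<Rightarrow> 'e"
  assumes
    \<comment> \<open>para-Hermitian structure on the tangent space\<close>
    g_bil: "bilinear g" and g_sym: "symmetric_form g" and g_nd: "nondegenerate g"
    and g_split: "split_signature g"
    and JT_lin: "linear JT" and JT_inv: "\<And>v. JT (JT v) = v"
    and JT_rank: "dim (eigenspace_pm JT 1) = dim (eigenspace_pm JT (-1))"
    and g_JT: "\<And>u w. g (JT u) (JT w) = - g u w"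
    \<comment> \<open>Courant algebroid fibre: pairing and anchor\<close>
    and pair_bil: "bilinear pair" and pair_sym: "symmetric_form pair"
    and pair_nd: "nondegenerate pair"
    and rho_lin: "linear rho"
    \<comment> \<open>exactness of 0 -> T*M -> E -> TM -> 0\<close>
    and rho_surj: "surj rho"
    and rho_star_inj: "inj_on (rho_star pair rho) covectors"
    and rho_star_ker: "rho_star pair rho ` covectors = {e. rho e = 0}"
    \<comment> \<open>para-Hermitian algebroid structure\<close>
    and J_lin: "linear J" and J_inv: "\<And>e. J (J e) = e"
    and J_rank: "dim (eigenspace_pm J 1) = dim (eigenspace_pm J (-1))"
    and pair_J: "\<And>a b. pair (J a) (J b) = - pair a b"
    \<comment> \<open>para-complex connection\<close>
    and A_lin: "linear A" and A_split: "\<And>v. rho (A v) = v"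
    and A_iso: "\<And>u w. pair (A u) (A w) = 0"
    and A_pc: "\<And>v. J (A v) = A (JT v)"
  shows
    "internal_direct_sum (eigenspace_pm J 1)
        (a_star pair rho (proj_minus J) ` annihilator (eigenspace_pm JT 1))
        (A ` eigenspace_pm JT 1)
     \<and> internal_direct_sum (eigenspace_pm J (-1))
        (a_star pair rho (proj_plus J) ` annihilator (eigenspace_pm JT (-1)))
        (A ` eigenspace_pm JT (-1))"
proof (rule conjI)
  have rker: "{e. rho e = 0} \<subseteq> rho_star pair rho ` covectors" using rho_star_ker by simp
  show "internal_direct_sum (eigenspace_pm J 1)
        (a_star pair rho (proj_minus J) ` annihilator (eigenspace_pm JT 1))
        (A ` eigenspace_pm JT 1)"
    by (rule half_part[OF pair_bil pair_sym pair_nd rho_lin rker J_lin J_inv pair_J JT_lin JT_inv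
          A_lin A_split A_iso A_pc])
  have nJl: "linear (\<lambda>x. - J x)" by (rule linear_compose_neg[OF J_lin])
  have nJTl: "linear (\<lambda>x. - JT x)" by (rule linear_compose_neg[OF JT_lin])
  have nJi: "- J (- J e) = e" for e by (simp add: linear_neg[OF J_lin] J_inv)
  have nJTi: "- JT (- JT v) = v" for v by (simp add: linear_neg[OF JT_lin] JT_inv)
  have npJ: "pair (- J a) (- J b) = - pair a b" for a b
    by (simp add: bilinear_lneg[OF pair_bil] bilinear_rneg[OF pair_bil] pair_J)
  have nApc: "- J (A v) = A (- JT v)" for v by (simp add: linear_neg[OF A_lin] A_pc)
  have e1: "eigenspace_pm (\<lambda>x. - J x) 1 = eigenspace_pm J (-1)"
    unfolding eigenspace_pm_def by (auto simp: minus_equation_iff)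
  have e2: "eigenspace_pm (\<lambda>x. - JT x) 1 = eigenspace_pm JT (-1)"
    unfolding eigenspace_pm_def by (auto simp: minus_equation_iff)
  have e3: "proj_minus (\<lambda>x. - J x) = proj_plus J"
    unfolding proj_minus_def proj_plus_def by (simp add: fun_eq_iff)
  show "internal_direct_sum (eigenspace_pm J (-1))
        (a_star pair rho (proj_plus J) ` annihilator (eigenspace_pm JT (-1)))
        (A ` eigenspace_pm JT (-1))"
    using half_part[OF pair_bil pair_sym pair_nd rho_lin rker nJl nJi npJ nJTl nJTi
          A_lin A_split A_iso nApc] unfolding e1 e2 e3 .
qed

end
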